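(* Let $\beta_1:\mathbb{R}\to\mathbb{R}^3$, $\beta_1(z')=(0,0,z')$, and $\beta_2:\mathbb{R}^2\to\mathbb{R}^3$, $\beta_2(z'')=(z''_1,z''_2,0)$. Let $dq_0^1$ and $dq_0^2$ be positive Radon measures on $\mathbb{R}$ and $\mathbb{R}^2$ respectively, each satisfying $\int_{|z|<1}|z|^2dq_0^l(z)+\int_{|z|\ge1}|z|\,dq_0^l(z)<\infty$, and jointly satisfying condition (B'). Let $H:\mathbb{R}^3\times\mathbb{R}^3\to\mathbb{R}$ be continuous, $\mathbb{Z}^3$-periodic in its first variable, with $H(y,0)\ge0$ for all $y$. Let $u$ be an upper semicontinuous $\mathbb{Z}^3$-periodic viscosity subsolution of $$H(y,\nabla v)+\max\Big\{-\int_{\mathbb{R}}[v(y+\beta_1(z'))-v(y)-\langle\beta_1(z'),\nabla v(y)\rangle]dq_0^1(z'),\ -\int_{\mathbb{R}^2}[v(y+\beta_2(z''))-v(y)-\langle\beta_2(z''),\nabla v(y)\rangle]dq_0^2(z'')\Big\}=0\ \text{in }\mathbb{T}^3.$$ If $u$ attains its maximum over $\mathbb{T}^3$ at some $\bar y$, then $u$ is constant on $\mathbb{T}^3$.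
   Context: $\mathbb{T}^3=[0,1]^3$; functions on it are $\mathbb{Z}^3$-periodic functions on $\mathbb{R}^3$. Condition (B'): let $S_0^l=\mathrm{supp}(dq_0^l)$, $l=1,2$. For any $y,y'\in\mathbb{T}^3$ there exist finitely many points $y_1=y,\dots,y_m=y'$ in $\mathbb{T}^3$ such that for any positive numbers $\varepsilon_i$ ($1\le i\le m$) one can choose subsets $J_i$, each either $J_i\subset S_0^1$ or $J_i\subset S_0^2$, such that if $J_i\subset S_0^l$ then $\int_{J_i}1\,dq_0^l>0$ and $y_i+\beta_l(z)\in B_{\varepsilon_i}(y_{i+1})$ (mod $\mathbb{Z}^3$) for all $z\in J_i$. Viscosity subsolution: for every $\hat y$ and $\phi\in C^2(\mathbb{R}^3)$ with $u-\phi$ attaining a global maximum at $\hat y$, $u(\hat y)=\phi(\hat y)$, the integrands with $\nabla v(\hat y)$ replaced by $\nabla\phi(\hat y)$ and $v$ replaced by $u$ are integrable and the left-hand side evaluated this way is $\le0$. *)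

theory Defs
  imports "HOL-Analysis.Analysis"
begin

text \<open>Points of the torus T^3 = [0,1]^3 (functions on it are Z^3-periodic functions on R^3).\<close>
definition torus3 :: "(real^3) set" where
  "torus3 = {y. \<forall>i. 0 \<le> y $ i \<and> y $ i \<le> 1}"

definition int_lattice3 :: "(real^3) set" where
  "int_lattice3 = {k. \<forall>i. k $ i \<in> \<int>}"

definition beta1 :: "real \<Rightarrow> real^3" where
  "beta1 z = vector [0, 0, z]"

definition beta2 :: "real^2 \<Rightarrow> real^3" where
  "beta2 z = vector [z $ 1, z $ 2, 0]"

definition radon_measure :: "'a::euclidean_space measure \<Rightarrow> bool" where
  "radon_measure q \<longleftrightarrow> sets q = sets borel \<and> (\<forall>K. compact K \<longrightarrow> emeasure q K < \<infinity>)"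

definition levy_moment_cond :: "'a::euclidean_space measure \<Rightarrow> bool" where
  "levy_moment_cond q \<longleftrightarrow>
     (\<integral>\<^sup>+ z. ennreal (if norm z < 1 then (norm z)\<^sup>2 else norm z) \<partial>q) < \<infinity>"

definition usc :: "('a::topological_space \<Rightarrow> real) \<Rightarrow> bool" where
  "usc u \<longleftrightarrow> (\<forall>c. open {y. u y < c})"

definition msupp :: "'a::topological_space measure \<Rightarrow> 'a set" where
  "msupp q = {z. \<forall>U. open U \<longrightarrow> z \<in> U \<longrightarrow> emeasure q U > 0}"

definition jump_step :: "'a::topological_space measure \<Rightarrow> ('a \<Rightarrow> real^3) \<Rightarrow> real^3 \<Rightarrow> real^3 \<Rightarrow> real \<Rightarrow> bool" where
  "jump_step q beta a b eps \<longleftrightarrow>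
     (\<exists>J. J \<subseteq> msupp q \<and> J \<in> sets q \<and> emeasure q J > 0 \<and>
          (\<forall>z\<in>J. \<exists>k\<in>int_lattice3. a + beta z + k \<in> ball b eps))"

definition condition_B' :: "real measure \<Rightarrow> (real^2) measure \<Rightarrow> bool" where
  "condition_B' q1 q2 \<longleftrightarrow>
     (\<forall>y\<in>torus3. \<forall>y'\<in>torus3. \<exists>m::nat. \<exists>ys::nat \<Rightarrow> real^3.
        m \<ge> 1 \<and> ys 1 = y \<and> ys m = y' \<and> (\<forall>i\<in>{1..m}. ys i \<in> torus3) \<and>
        (\<forall>eps::nat \<Rightarrow> real. (\<forall>i\<in>{1..m}. eps i > 0) \<longrightarrow>
           (\<forall>i\<in>{1..<m}. jump_step q1 beta1 (ys i) (ys (Suc i)) (eps i) \<or>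
                         jump_step q2 beta2 (ys i) (ys (Suc i)) (eps i))))"

definition C2_grad :: "(real^3 \<Rightarrow> real) \<Rightarrow> (real^3 \<Rightarrow> real^3) \<Rightarrow> bool" where
  "C2_grad phi g \<longleftrightarrow>
     (\<forall>x. (phi has_derivative (\<lambda>h. g x \<bullet> h)) (at x)) \<and>
     (\<exists>D :: real^3 \<Rightarrow> ((real^3) \<Rightarrow>\<^sub>L (real^3)).
        (\<forall>x. (g has_derivative blinfun_apply (D x)) (at x)) \<and> continuous_on UNIV D)"

definition nonlocal :: "'a measure \<Rightarrow> ('a \<Rightarrow> real^3) \<Rightarrow> (real^3 \<Rightarrow> real) \<Rightarrow> real^3 \<Rightarrow> real^3 \<Rightarrow> real" where
  "nonlocal q beta u y p = (\<integral>z. (u (y + beta z) - u y - beta z \<bullet> p) \<partial>q)"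

definition nonlocal_integrable :: "'a measure \<Rightarrow> ('a \<Rightarrow> real^3) \<Rightarrow> (real^3 \<Rightarrow> real) \<Rightarrow> real^3 \<Rightarrow> real^3 \<Rightarrow> bool" where
  "nonlocal_integrable q beta u y p \<longleftrightarrow> integrable q (\<lambda>z. u (y + beta z) - u y - beta z \<bullet> p)"

definition visc_subsolution ::
  "(real^3 \<Rightarrow> real^3 \<Rightarrow> real) \<Rightarrow> real measure \<Rightarrow> (real^2) measure \<Rightarrow> (real^3 \<Rightarrow> real) \<Rightarrow> bool" where
  "visc_subsolution H q1 q2 u \<longleftrightarrow>
     (\<forall>yh phi g. C2_grad phi g \<longrightarrow> (\<forall>y. u y - phi y \<le> u yh - phi yh) \<longrightarrow> u yh = phi yh \<longrightarrow>
        nonlocal_integrable q1 beta1 u yh (g yh) \<and> nonlocal_integrable q2 beta2 u yh (g yh) \<and>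
        H yh (g yh) + max (- nonlocal q1 beta1 u yh (g yh)) (- nonlocal q2 beta2 u yh (g yh)) \<le> 0)"

end

theory Submission
  imports Defs
begin

lemma ae_zero_of_nonpos:
  fixes f :: "'a \<Rightarrow> real"
  assumes "integrable q f" "integral\<^sup>L q f \<ge> 0" "\<And>z. f z \<le> 0"
  shows "AE z in q. f z = 0"
proof -
  have i: "integrable q (\<lambda>z. - f z)" using assms(1) by simp
  have "integral\<^sup>L q (\<lambda>z. - f z) \<ge> 0" by (rule integral_nonneg_AE) (use assms(3) in auto)
  moreover have "integral\<^sup>L q (\<lambda>z. - f z) = - integral\<^sup>L q f" by simp
  ultimately have "integral\<^sup>L q (\<lambda>z. - f z) = 0" using assms(2) by linarith
  then have "AE z in q. - f z = 0"
    using integral_nonneg_eq_0_iff_AE[OF i] assms(3) by auto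
  then show ?thesis by auto
qed

lemma ae_pos_exists:
  assumes "AE x in M. P x" "J \<in> sets M" "emeasure M J > 0"
  shows "\<exists>x\<in>J. P x"
proof (rule ccontr)
  assume c: "\<not> (\<exists>x\<in>J. P x)"
  from assms(1) obtain N where N: "{x \<in> space M. \<not> P x} \<subseteq> N" "emeasure M N = 0" "N \<in> sets M"
    by (rule AE_E)
  have "J \<subseteq> N" using c N(1) sets.sets_into_space[OF assms(2)] by auto
  then have "emeasure M J \<le> emeasure M N" by (rule emeasure_mono) fact
  then show False using N(2) assms(3) by simp
qed

theorem theorem5p1:
  fixes q1 :: "real measure" and q2 :: "(real^2) measure"
    and H :: "real^3 \<Rightarrow> real^3 \<Rightarrow> real" and u :: "real^3 \<Rightarrow> real" and ybar :: "real^3"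
  assumes "radon_measure q1" and "radon_measure q2"
    and "levy_moment_cond q1" and "levy_moment_cond q2"
    and "condition_B' q1 q2"
    and "continuous_on UNIV (\<lambda>(y, p). H y p)"
    and "\<And>y p k. k \<in> int_lattice3 \<Longrightarrow> H (y + k) p = H y p"
    and "\<And>y. H y 0 \<ge> 0"
    and "usc u"
    and "\<And>y k. k \<in> int_lattice3 \<Longrightarrow> u (y + k) = u y"
    and "visc_subsolution H q1 q2 u"
    and "ybar \<in> torus3" and "\<And>y. y \<in> torus3 \<Longrightarrow> u y \<le> u ybar"
  shows "\<forall>y\<in>torus3. u y = u ybar"
proof -
  define M where "M = u ybar"
  have gmax: "u y \<le> M" for y
  proof -
    define k :: "real^3" where "k = (\<chi> i. - of_int \<lfloor>y $ i\<rfloor>)"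
    have kl: "k \<in> int_lattice3" unfolding int_lattice3_def k_def by auto
    have "y + k \<in> torus3" unfolding torus3_def k_def
      by (auto simp: of_int_floor_le) (smt (verit) floor_correct of_int_add of_int_1)
    then have "u (y + k) \<le> M" using assms(13) M_def by auto
    then show ?thesis using assms(10)[OF kl] by simp
  qed
  have e1: "(\<lambda>h. (0::real^3) \<bullet> h) = (\<lambda>h. 0)" by auto
  have e2: "blinfun_apply (0 :: (real^3) \<Rightarrow>\<^sub>L (real^3)) = (\<lambda>h. 0)" by auto
  have C2: "C2_grad (\<lambda>x. M) (\<lambda>x. 0)"
    unfolding C2_grad_def e1
    apply (intro conjI allI exI[of _ "\<lambda>x. 0"])
    apply simp
    apply (simp add: e2)
    apply (simp add: e2)
    done
  have key: "(AE z in q1. u (y + beta1 z) = M) \<and> (AE z in q2. u (y + beta2 z) = M)"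
    if uy: "u y = M" for y
  proof -
    have v: "nonlocal_integrable q1 beta1 u y 0 \<and> nonlocal_integrable q2 beta2 u y 0 \<and>
        H y 0 + max (- nonlocal q1 beta1 u y 0) (- nonlocal q2 beta2 u y 0) \<le> 0"
    proof -
      have "\<forall>yh phi g. C2_grad phi g \<longrightarrow> (\<forall>y. u y - phi y \<le> u yh - phi yh) \<longrightarrow> u yh = phi yh \<longrightarrow>
        nonlocal_integrable q1 beta1 u yh (g yh) \<and> nonlocal_integrable q2 beta2 u yh (g yh) \<and>
        H yh (g yh) + max (- nonlocal q1 beta1 u yh (g yh)) (- nonlocal q2 beta2 u yh (g yh)) \<le> 0"
        using assms(11) unfolding visc_subsolution_def by blast
      then have "C2_grad (\<lambda>x. M) (\<lambda>x. 0) \<longrightarrow> (\<forall>x. u x - M \<le> u y - M) \<longrightarrow> u y = M \<longrightarrow>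
        nonlocal_integrable q1 beta1 u y 0 \<and> nonlocal_integrable q2 beta2 u y 0 \<and>
        H y 0 + max (- nonlocal q1 beta1 u y 0) (- nonlocal q2 beta2 u y 0) \<le> 0"
        by (rule_tac allE, assumption, erule_tac x="\<lambda>x. M" in allE, erule_tac x="\<lambda>x. 0" in allE) simp
      moreover have "\<forall>x. u x - M \<le> u y - M" using gmax uy by simp
      ultimately show ?thesis using C2 uy by blast
    qed
    have h: "H y 0 \<ge> 0" by (rule assms(8))
    have "AE z in q1. u (y + beta1 z) - u y - beta1 z \<bullet> 0 = 0"
      apply (rule ae_zero_of_nonpos)
      using v h gmax uy unfolding nonlocal_integrable_def nonlocal_def apply simp_all
      apply (elim conjE; simp add: max_def split: if_splits)
      done
    moreover have "AE z in q2. u (y + beta2 z) - u y - beta2 z \<bullet> 0 = 0"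
      apply (rule ae_zero_of_nonpos)
      using v h gmax uy unfolding nonlocal_integrable_def nonlocal_def apply simp_all
      apply (elim conjE; simp add: max_def split: if_splits)
      done
    ultimately show ?thesis using uy by auto
  qed
  have step: "u b = M" if ua: "u a = M" and
    js: "jump_step q1 beta1 a b e \<or> jump_step q2 beta2 a b e"
    and e: "u b < M \<longrightarrow> ball b e \<subseteq> {x. u x < M}" for a b e
  proof (rule ccontr)
    assume nb: "u b \<noteq> M"
    then have lt: "u b < M" using gmax[of b] by auto
    have "\<exists>w\<in>ball b e. u w = M"
    proof (cases "jump_step q1 beta1 a b e")
      case True
      then obtain J where J: "J \<in> sets q1" "emeasure q1 J > 0"
        "\<forall>z\<in>J. \<exists>k\<in>int_lattice3. a + beta1 z + k \<in> ball b e"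
        unfolding jump_step_def by blast
      obtain z where z: "z \<in> J" "u (a + beta1 z) = M"
        using ae_pos_exists[OF conjunct1[OF key[OF ua]] J(1,2)] by blast
      then obtain k where "k \<in> int_lattice3" "a + beta1 z + k \<in> ball b e" using J(3) by blast
      then show ?thesis using z assms(10) by metis
    next
      case False
      then have "jump_step q2 beta2 a b e" using js by blast
      then obtain J where J: "J \<in> sets q2" "emeasure q2 J > 0"
        "\<forall>z\<in>J. \<exists>k\<in>int_lattice3. a + beta2 z + k \<in> ball b e"
        unfolding jump_step_def by blast
      obtain z where z: "z \<in> J" "u (a + beta2 z) = M"
        using ae_pos_exists[OF conjunct2[OF key[OF ua]] J(1,2)] by blast
      then obtain k where "k \<in> int_lattice3" "a + beta2 z + k \<in> ball b e" using J(3) by blast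
      then show ?thesis using z assms(10) by metis
    qed
    then show False using e lt by auto
  qed
  show ?thesis
  proof
    fix y assume y: "y \<in> torus3"
    obtain m ys where m: "m \<ge> 1" "ys 1 = ybar" "ys m = y"
      and ch: "\<forall>eps::nat \<Rightarrow> real. (\<forall>i\<in>{1..m}. eps i > 0) \<longrightarrow>
           (\<forall>i\<in>{1..<m}. jump_step q1 beta1 (ys i) (ys (Suc i)) (eps i) \<or>
                         jump_step q2 beta2 (ys i) (ys (Suc i)) (eps i))"
    proof -
      have "\<forall>y\<in>torus3. \<forall>y'\<in>torus3. \<exists>m::nat. \<exists>ys::nat \<Rightarrow> real^3.
        m \<ge> 1 \<and> ys 1 = y \<and> ys m = y' \<and> (\<forall>i\<in>{1..m}. ys i \<in> torus3) \<and>
        (\<forall>eps::nat \<Rightarrow> real. (\<forall>i\<in>{1..m}. eps i > 0) \<longrightarrow>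
           (\<forall>i\<in>{1..<m}. jump_step q1 beta1 (ys i) (ys (Suc i)) (eps i) \<or>
                         jump_step q2 beta2 (ys i) (ys (Suc i)) (eps i)))"
        using assms(5) unfolding condition_B'_def by blast
      then have "\<exists>m::nat. \<exists>ys::nat \<Rightarrow> real^3.
        m \<ge> 1 \<and> ys 1 = ybar \<and> ys m = y \<and> (\<forall>i\<in>{1..m}. ys i \<in> torus3) \<and>
        (\<forall>eps::nat \<Rightarrow> real. (\<forall>i\<in>{1..m}. eps i > 0) \<longrightarrow>
           (\<forall>i\<in>{1..<m}. jump_step q1 beta1 (ys i) (ys (Suc i)) (eps i) \<or>
                         jump_step q2 beta2 (ys i) (ys (Suc i)) (eps i)))"
        using assms(12) y by blast
      then show ?thesis using that by blast
    qed
    have ex: "\<exists>e>0. u b < M \<longrightarrow> ball b e \<subseteq> {x. u x < M}" for b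
    proof (cases "u b < M")
      case True
      have "open {x. u x < M}" using assms(9) unfolding usc_def by blast
      then obtain e where "e > 0" "ball b e \<subseteq> {x. u x < M}"
        using True open_contains_ball by blast
      then show ?thesis by blast
    qed (auto intro: exI[of _ 1])
    define eps where "eps i = (SOME e. e > 0 \<and> (u (ys (Suc i)) < M \<longrightarrow> ball (ys (Suc i)) e \<subseteq> {x. u x < M}))" for i
    have epsp: "eps i > 0 \<and> (u (ys (Suc i)) < M \<longrightarrow> ball (ys (Suc i)) (eps i) \<subseteq> {x. u x < M})" for i
      unfolding eps_def using someI_ex[OF ex[of "ys (Suc i)"]] by blast
    have js: "\<forall>i\<in>{1..<m}. jump_step q1 beta1 (ys i) (ys (Suc i)) (eps i) \<or>
                         jump_step q2 beta2 (ys i) (ys (Suc i)) (eps i)"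
    proof -
      have "\<forall>i\<in>{1..m}. eps i > 0" using epsp by blast
      then show ?thesis using ch by blast
    qed
    have "u (ys (Suc j)) = M" if "Suc j \<le> m" for j
      using that
    proof (induction j)
      case 0 then show ?case using m M_def by simp
    next
      case (Suc j)
      have "u (ys (Suc j)) = M" using Suc by simp
      moreover have "Suc j \<in> {1..<m}" using Suc.prems by auto
      moreover have "Suc (Suc j) = Suc (Suc j)" ..
      ultimately have j: "jump_step q1 beta1 (ys (Suc j)) (ys (Suc (Suc j))) (eps (Suc j)) \<or>
          jump_step q2 beta2 (ys (Suc j)) (ys (Suc (Suc j))) (eps (Suc j))" using js by blast
      show ?case by (rule step[OF \<open>u (ys (Suc j)) = M\<close> j]) (use epsp in blast)
    qed
    then have "u (ys m) = M" using m(1) by (metis Suc_pred' le_refl One_nat_def le_simps(3))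
    then show "u y = u ybar" using m M_def by simp
  qed
qed

end
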